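(* Let $n \geq 2$ and $d$ be integers with $0 < d < n$, and write $n = n^1 \cdot d + n^0$ with $n^1, n^0 \in \mathbb{Z}$ and $0 \leq n^0 < d$. Let $a \in \mathbb{Z}_n$ and let $\langle a\rangle_0, \langle a\rangle_1 \in \mathbb{Z}_n$ satisfy $\langle a\rangle_0 + \langle a\rangle_1 = a$ in $\mathbb{Z}_n$. Let $a_u, a_0, a_1 \in \{0,1,\ldots,n-1\}$ be the unsigned representatives of $a, \langle a\rangle_0, \langle a\rangle_1$ respectively, and write $a_0 = a_0^1 \cdot d + a_0^0$ and $a_1 = a_1^1 \cdot d + a_1^0$ with $a_0^1,a_0^0,a_1^1,a_1^0 \in \mathbb{Z}$ and $0 \le a_0^0, a_1^0 < d$. Let $n' = \lceil n/2 \rceil$. Define integers $$\mathsf{corr} = \begin{cases} -1 & \text{if } (a_u \ge n') \wedge (a_0 < n') \wedge (a_1 < n'),\\ 1 & \text{if } (a_u < n') \wedge (a_0 \ge n') \wedge (a_1 \ge n'),\\ 0 & \text{otherwise,}\end{cases}$$ $$A = a_0^0 + a_1^0 - \big(\mathbf{1}\{a_0 \ge n'\} + \mathbf{1}\{a_1 \ge n'\} - \mathsf{corr}\big)\cdot n^0,$$ $$B = \mathsf{idiv}\big(a_0^0 - \mathbf{1}\{a_0 \ge n'\}\cdot n^0,\ d\big) + \mathsf{idiv}\big(a_1^0 - \mathbf{1}\{a_1 \ge n'\}\cdot n^0,\ d\big),$$ $$C = \mathbf{1}\{A < d\} + \mathbf{1}\{A < 0\} + \mathbf{1}\{A < -d\}.$$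 Then $$\mathsf{rdiv}(\langle a\rangle_0, d) + \mathsf{rdiv}(\langle a\rangle_1, d) + \big(\mathsf{corr}\cdot n^1 + 1 - C - B\big) \equiv \mathsf{rdiv}(a, d) \pmod n.$$
   Context: $\mathbf{1}\{P\}$ denotes the indicator that is $1$ if $P$ is true and $0$ otherwise. $\mathsf{idiv}:\mathbb{Z}\times\mathbb{Z}\to\mathbb{Z}$ is signed integer division in which the quotient is rounded towards $-\infty$ (so for $d>0$, $\mathsf{idiv}(x,d) = \lfloor x/d \rfloor$). For $x \in \mathbb{Z}_n$ with unsigned representative $x_u \in \{0,\ldots,n-1\}$ and an integer $0<d<n$, $\mathsf{rdiv}(x,d) \in \mathbb{Z}_n$ is defined as $\mathsf{idiv}\big(x_u - \mathbf{1}\{x_u \ge \lceil n/2\rceil\}\cdot n,\ d\big) \bmod n$, i.e. division of the signed value of $x$ by $d$, reduced mod $n$. The sum in the conclusion is taken in $\mathbb{Z}_n$ (integers reduced modulo $n$). *)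

theory Defs
  imports Main
begin

text \<open>Elements of Z_n are represented by integers; the unsigned representative of x is x mod n
(in {0..n-1} for n > 0). Signed division is int div (rounds toward minus infinity).\<close>

definition ind :: "bool \<Rightarrow> int" where
  "ind P = (if P then 1 else 0)"

text \<open>rdiv n x d: division of the signed value of x (in Z_n) by d, reduced mod n.
 ceil(n/2) = (n+1) div 2 for integer n.\<close>
definition rdiv :: "int \<Rightarrow> int \<Rightarrow> int \<Rightarrow> int" where
  "rdiv n x d = ((x mod n - ind (x mod n \<ge> (n + 1) div 2) * n) div d) mod n"

end

theory Submission
  imports Defs
begin

lemma div_char: fixes x q d :: int
  assumes "0 < d" "q*d \<le> x" "x < q*d + d" shows "x div d = q"
proof -
  have "x div d = ((x - q*d) + q*d) div d" by simp
  also have "... = (x - q*d) div d + q" using assms(1) by (subst div_mult_self1) auto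
  finally have "x div d = (x - q*d) div d + q" .
  moreover have "(x - q*d) div d = 0" using assms by (intro div_pos_pos_trivial) auto
  ultimately show ?thesis by simp
qed

theorem theorem4p1:
  fixes n d au a0 a1 :: int
  assumes "n \<ge> 2" and "0 < d" and "d < n"
    and "0 \<le> au" and "au < n"
    and "0 \<le> a0" and "a0 < n"
    and "0 \<le> a1" and "a1 < n"
    and "(a0 + a1) mod n = au"
  shows "let n1 = n div d; n0 = n mod d;
             a01 = a0 div d; a00 = a0 mod d;
             a11 = a1 div d; a10 = a1 mod d;
             n' = (n + 1) div 2;
             corr = (if au \<ge> n' \<and> a0 < n' \<and> a1 < n' then -1
                     else if au < n' \<and> a0 \<ge> n' \<and> a1 \<ge> n' then 1 else 0);
             A = a00 + a10 - (ind (a0 \<ge> n') + ind (a1 \<ge> n') - corr) * n0;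
             B = (a00 - ind (a0 \<ge> n') * n0) div d + (a10 - ind (a1 \<ge> n') * n0) div d;
             C = ind (A < d) + ind (A < 0) + ind (A < - d)
         in (rdiv n a0 d + rdiv n a1 d + (corr * n1 + 1 - C - B)) mod n = rdiv n au d"
proof -
  define n1 where "n1 = n div d"
  define n0 where "n0 = n mod d"
  define a01 where "a01 = a0 div d"
  define a00 where "a00 = a0 mod d"
  define a11 where "a11 = a1 div d"
  define a10 where "a10 = a1 mod d"
  define h where "h = (n + 1) div 2"
  define w0 where "w0 = ind (a0 \<ge> h)"
  define w1 where "w1 = ind (a1 \<ge> h)"
  define w where "w = ind (au \<ge> h)"
  define corr where "corr = (if au \<ge> h \<and> a0 < h \<and> a1 < h then -1
                     else if au < h \<and> a0 \<ge> h \<and> a1 \<ge> h then (1::int) else 0)"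
  define A where "A = a00 + a10 - (w0 + w1 - corr) * n0"
  define B where "B = (a00 - w0 * n0) div d + (a10 - w1 * n0) div d"
  define C where "C = ind (A < d) + ind (A < 0) + ind (A < - d)"
  have nn: "n = n1*d + n0" unfolding n1_def n0_def by simp
  have n0b: "0 \<le> n0" "n0 < d" unfolding n0_def using assms by auto
  have e0: "a0 = a01*d + a00" unfolding a01_def a00_def by simp
  have e1: "a1 = a11*d + a10" unfolding a11_def a10_def by simp
  have b0: "0 \<le> a00" "a00 < d" unfolding a00_def using assms by auto
  have b1: "0 \<le> a10" "a10 < d" unfolding a10_def using assms by auto
  have hb: "2*h \<ge> n" "2*h \<le> n+1" unfolding h_def by auto
  have key: "au - w*n = (a0 - w0*n) + (a1 - w1*n) + corr*n"
  proof -
    have "a0 + a1 = au \<or> a0 + a1 = au + n"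
    proof (cases "a0 + a1 < n")
      case True then show ?thesis using assms by (simp add: mod_pos_pos_trivial)
    next
      case False
      have "(a0 + a1 - n) mod n = a0 + a1 - n" using False assms by (intro mod_pos_pos_trivial) auto
      then have "(a0 + a1) mod n = a0 + a1 - n" by (simp add: minus_mod_self2)
      then show ?thesis using assms by simp
    qed
    note disj = this
    have ps: "0 \<le> a0" "a0 < n" "0 \<le> a1" "a1 < n" "0 \<le> au" "au < n" using assms by auto
    show ?thesis
      using disj hb ps unfolding w_def w0_def w1_def corr_def ind_def
      by (cases "a0 \<ge> h"; cases "a1 \<ge> h"; cases "au \<ge> h"; simp; linarith)
  qed
  have wb: "0 \<le> w0 + w1 - corr" "w0 + w1 - corr \<le> 2"
    unfolding w0_def w1_def corr_def ind_def by auto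
  have Ab: "-2*d < A" "A < 2*d"
  proof -
    have "(w0 + w1 - corr) * n0 \<le> 2 * n0" using wb n0b by (intro mult_right_mono) auto
    moreover have "(w0 + w1 - corr) * n0 \<ge> 0" using wb n0b by simp
    ultimately show "-2*d < A" "A < 2*d" unfolding A_def using b0 b1 n0b by auto
  qed
  have AC: "A div d = 1 - C"
  proof -
    consider "A \<ge> d" | "0 \<le> A \<and> A < d" | "-d \<le> A \<and> A < 0" | "A < -d" by linarith
    then show ?thesis
    proof cases
      case 1 then show ?thesis unfolding C_def ind_def using Ab assms(2)
        by (simp add: div_char[of d 1 A])
    next
      case 2 then show ?thesis unfolding C_def ind_def using Ab assms(2)
        by (simp add: div_char[of d 0 A])
    next
      case 3 then show ?thesis unfolding C_def ind_def using Ab assms(2)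
        by (simp add: div_char[of d "-1" A])
    next
      case 4 then show ?thesis unfolding C_def ind_def using Ab assms(2)
        by (simp add: div_char[of d "-2" A])
    qed
  qed
  have s0: "(a0 - w0*n) div d = a01 - w0*n1 + (a00 - w0*n0) div d"
  proof -
    have "a0 - w0*n = (a00 - w0*n0) + (a01 - w0*n1)*d" using e0 nn by (simp add: algebra_simps)
    then show ?thesis using assms(2) by simp
  qed
  have s1: "(a1 - w1*n) div d = a11 - w1*n1 + (a10 - w1*n0) div d"
  proof -
    have "a1 - w1*n = (a10 - w1*n0) + (a11 - w1*n1)*d" using e1 nn by (simp add: algebra_simps)
    then show ?thesis using assms(2) by simp
  qed
  have s: "(au - w*n) div d = a01 + a11 - (w0 + w1 - corr)*n1 + A div d"
  proof -
    have "au - w*n = A + (a01 + a11 - (w0 + w1 - corr)*n1)*d"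
      using key e0 e1 nn unfolding A_def by (simp add: algebra_simps)
    then show ?thesis using assms(2) by simp
  qed
  have r0: "rdiv n a0 d = ((a0 - w0*n) div d) mod n"
    unfolding rdiv_def w0_def h_def using assms by simp
  have r1: "rdiv n a1 d = ((a1 - w1*n) div d) mod n"
    unfolding rdiv_def w1_def h_def using assms by simp
  have r: "rdiv n au d = ((au - w*n) div d) mod n"
    unfolding rdiv_def w_def h_def using assms by simp
  have "(rdiv n a0 d + rdiv n a1 d + (corr * n1 + 1 - C - B)) mod n
      = ((a0 - w0*n) div d + (a1 - w1*n) div d + (corr * n1 + 1 - C - B)) mod n"
    unfolding r0 r1 by (metis mod_add_eq mod_add_left_eq)
  also have "(a0 - w0*n) div d + (a1 - w1*n) div d + (corr * n1 + 1 - C - B) = (au - w*n) div d"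
    unfolding s0 s1 s AC B_def by (simp add: algebra_simps)
  finally have "(rdiv n a0 d + rdiv n a1 d + (corr * n1 + 1 - C - B)) mod n = rdiv n au d"
    using r by simp
  then show ?thesis
    unfolding Let_def C_def A_def B_def corr_def w0_def w1_def h_def n1_def n0_def a00_def a10_def .
qed

end
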